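(* Let $A,B$ be Hermitian operators on a finite-dimensional Hilbert space $\mathbb{S}_1\oplus\mathbb{S}_2$ (with $\mathbb{S}_1,\mathbb{S}_2$ orthogonal and $\mathbb{S}_i$ also denoting the orthogonal projector onto it). Suppose $A$ is invertible, $A=\mathbb{S}_1A\mathbb{S}_1+\mathbb{S}_2A\mathbb{S}_2$, and for positive numbers $G_1,G_2$: $$\|\mathbb{S}_1A^{-1}\mathbb{S}_1\|<1/G_1,\quad \|\mathbb{S}_2A^{-1}\mathbb{S}_2\|<1/G_2,$$ $$b_{11}=\|\mathbb{S}_1B\mathbb{S}_1\|<G_1/2,\quad b_{22}=\|\mathbb{S}_2B\mathbb{S}_2\|<G_2/2,\quad b_{12}=\|\mathbb{S}_1B\mathbb{S}_2\|<\min(G_1,G_2)/2.$$ Then $A-B$ is invertible, and $$\|\mathbb{S}_1(A-B)^{-1}\mathbb{S}_2\|<\frac{b_{12}}{(G_1-b_{11})(G_2-b_{22})-b_{12}^2},$$ $$\|\mathbb{S}_1(A-B)^{-1}\mathbb{S}_1\|<\frac{1}{G_1-b_{11}}\big(1+b_{12}\|\mathbb{S}_1(A-B)^{-1}\mathbb{S}_2\|\big),$$ $$\|\mathbb{S}_2(A-B)^{-1}\mathbb{S}_2\|<\frac{1}{G_2-b_{22}}\big(1+b_{12}\|\mathbb{S}_1(A-B)^{-1}\mathbb{S}_2\|\big).$$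
   Context: $\|\cdot\|$ denotes the operator 2-norm. *)

theory Defs
  imports "HOL-Analysis.Analysis"
begin

text \<open>Finite-dimensional complex Hilbert space modelled as complex^'n with the
  Euclidean (l2) norm; operators are matrices complex^'n^'n.\<close>

definition adjoint_mat :: "complex^'n^'n \<Rightarrow> complex^'n^'n" where
  "adjoint_mat M = (\<chi> i j. cnj (M $ j $ i))"

definition hermitian :: "complex^'n^'n \<Rightarrow> bool" where
  "hermitian M \<longleftrightarrow> adjoint_mat M = M"

definition opnorm :: "complex^'n^'n \<Rightarrow> real" where
  "opnorm M = onorm (\<lambda>x. M *v x)"

definition orth_proj :: "complex^'n^'n \<Rightarrow> bool" where
  "orth_proj P \<longleftrightarrow> P ** P = P \<and> hermitian P"

end

theory Submission imports Defs begin

lemma opn: "norm (M *v x) \<le> opnorm M * norm x"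
  unfolding opnorm_def by (rule onorm) simp

lemma opn_le: "(\<And>x. norm (M *v x) \<le> b * norm x) \<Longrightarrow> opnorm M \<le> b"
  unfolding opnorm_def by (rule onorm_le)

lemma opn_nonneg: "opnorm M \<ge> 0"
  unfolding opnorm_def by (rule onorm_pos_le) simp

lemma adj_mult: "adjoint_mat (P ** Q) = adjoint_mat Q ** adjoint_mat (P::complex^'n^'n)"
  by (simp add: vec_eq_iff adjoint_mat_def matrix_matrix_mult_def mult.commute)

lemma adj_diff: "adjoint_mat (P - Q) = adjoint_mat P - adjoint_mat (Q::complex^'n^'n)"
  by (simp add: vec_eq_iff adjoint_mat_def)

lemma adj_one: "adjoint_mat (mat 1 :: complex^'n^'n) = mat 1"
  by (simp add: vec_eq_iff adjoint_mat_def mat_def)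

lemma adj_adj: "adjoint_mat (adjoint_mat P) = (P::complex^'n^'n)"
  by (simp add: vec_eq_iff adjoint_mat_def)

lemma cinner: "inner (a::complex) b = Re (a * cnj b)"
  by (simp add: inner_complex_def)

lemma inner_adj: "inner (M *v x) y = inner x (adjoint_mat M *v (y::complex^'n))"
proof -
  have "(\<Sum>i\<in>UNIV. (\<Sum>j\<in>UNIV. M $ i $ j * x $ j) * cnj (y $ i))
     = (\<Sum>j\<in>UNIV. x $ j * cnj (\<Sum>i\<in>UNIV. cnj (M $ i $ j) * y $ i))"
  proof -
    have l: "(\<Sum>i\<in>UNIV. (\<Sum>j\<in>UNIV. M $ i $ j * x $ j) * cnj (y $ i))
        = (\<Sum>i\<in>UNIV. \<Sum>j\<in>UNIV. M $ i $ j * x $ j * cnj (y $ i))"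
      by (simp add: sum_distrib_right)
    have r: "(\<Sum>j\<in>UNIV. x $ j * cnj (\<Sum>i\<in>UNIV. cnj (M $ i $ j) * y $ i))
        = (\<Sum>j\<in>UNIV. \<Sum>i\<in>UNIV. M $ i $ j * x $ j * cnj (y $ i))"
      by (simp add: sum_distrib_left cnj_sum mult_ac)
    show ?thesis unfolding l r by (rule sum.swap)
  qed
  then have "Re (\<Sum>i\<in>UNIV. (\<Sum>j\<in>UNIV. M $ i $ j * x $ j) * cnj (y $ i))
     = Re (\<Sum>j\<in>UNIV. x $ j * cnj (\<Sum>i\<in>UNIV. cnj (M $ i $ j) * y $ i))" by simp
  then show ?thesis
    by (simp add: inner_vec_def cinner matrix_vector_mult_def adjoint_mat_def Re_sum)
qed

lemma opnorm_adj: "opnorm (adjoint_mat M) \<le> opnorm (M::complex^'n^'n)"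
proof (rule opn_le)
  fix y :: "complex^'n"
  let ?z = "adjoint_mat M *v y"
  have "norm ?z ^ 2 = inner ?z ?z" by (simp add: power2_norm_eq_inner)
  also have "\<dots> = inner y (M *v ?z)"
    by (metis adj_adj inner_adj inner_commute)
  also have "\<dots> \<le> norm y * norm (M *v ?z)" by (rule norm_cauchy_schwarz)
  also have "\<dots> \<le> norm y * (opnorm M * norm ?z)"
    by (simp add: mult_left_mono opn)
  finally have h: "norm ?z * norm ?z \<le> (opnorm M * norm y) * norm ?z"
    by (simp add: power2_eq_square mult_ac)
  show "norm ?z \<le> opnorm M * norm y"
  proof (cases "norm ?z = 0")
    case True then show ?thesis by (simp add: opn_nonneg)
  next
    case False then show ?thesis using h by (simp add: mult_le_cancel_right)
  qed
qed

lemma proj_norm: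
  assumes "hermitian S" "\<And>v. S *v (S *v v) = S *v v"
  shows "norm (S *v x) \<le> norm (x::complex^'n)"
proof -
  let ?z = "S *v x"
  have "norm ?z ^ 2 = inner ?z ?z" by (simp add: power2_norm_eq_inner)
  also have "\<dots> = inner x (S *v ?z)"
    by (metis assms(1) hermitian_def inner_adj)
  also have "S *v ?z = ?z" by (rule assms(2))
  also have "inner x ?z \<le> norm x * norm ?z" by (rule norm_cauchy_schwarz)
  finally have h: "norm ?z * norm ?z \<le> norm x * norm ?z"
    by (simp add: power2_eq_square)
  show ?thesis
  proof (cases "norm ?z = 0")
    case True then show ?thesis by simp
  next
    case False then show ?thesis using h by (simp add: mult_le_cancel_right)
  qed
qed

lemma inj_invertible:
  fixes M :: "complex^'n^'n"
  assumes "\<And>x. M *v x = 0 \<Longrightarrow> x = 0"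
  shows "invertible M"
proof -
  have "inj ((*v) M)"
  proof (rule injI)
    fix x y :: "complex^'n" assume "M *v x = M *v y"
    then have "M *v (x - y) = 0" by (simp add: matrix_vector_mult_diff_distrib)
    then have "x - y = 0" by (rule assms)
    then show "x = y" by simp
  qed
  then show ?thesis
    using det_nz_iff_inj_gen[OF matrix_vector_mul_linear_gen, of M]
    by (simp add: matrix_of_matrix_vector_mul invertible_det_nz)
qed

lemma inv_props:
  assumes "invertible M"
  shows "M ** matrix_inv M = mat 1" "matrix_inv M ** M = mat 1"
  using assms unfolding invertible_def matrix_inv_def by (metis (mono_tags, lifting) someI_ex)+


lemma lower_bound:
  fixes A P :: "complex^'n^'n" and G :: real
  assumes inv: "invertible A" and PP: "\<And>v. P *v (P *v v) = P *v v"
    and PA: "\<And>v. P *v (A *v v) = A *v (P *v v)"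
    and G: "G > 0" and n: "opnorm (P ** matrix_inv A ** P) < 1 / G"
  shows "\<exists>g>G. \<forall>v. g * norm (P *v v) \<le> norm (A *v (P *v v))"
proof -
  let ?c = "opnorm (P ** matrix_inv A ** P)"
  have c0: "?c \<ge> 0" by (rule opn_nonneg)
  have key: "norm (P *v v) \<le> ?c * norm (A *v (P *v v))" for v
  proof -
    have "(P ** matrix_inv A ** P) *v (A *v (P *v v)) = P *v (matrix_inv A *v (A *v (P *v (P *v v))))"
      by (simp add: matrix_vector_mul_assoc[symmetric] PA)
    also have "\<dots> = P *v v"
    proof -
      have "matrix_inv A *v (A *v w) = w" for w
        by (simp add: matrix_vector_mul_assoc inv_props[OF inv])
      then show ?thesis by (simp add: PP)
    qed
    finally have eqv: "(P ** matrix_inv A ** P) *v (A *v (P *v v)) = P *v v" .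
    show ?thesis using opn[of "P ** matrix_inv A ** P" "A *v (P *v v)"] unfolding eqv .
  qed
  define g where "g = (if ?c = 0 then G + 1 else 1 / ?c)"
  have gG: "g > G"
  proof (cases "?c = 0")
    case True then show ?thesis by (simp add: g_def)
  next
    case False
    then have "?c > 0" using c0 by simp
    then show ?thesis using n G unfolding g_def by (simp add: field_simps)
  qed
  have gc: "g * ?c \<le> 1" unfolding g_def by simp
  have "g * norm (P *v v) \<le> norm (A *v (P *v v))" for v
  proof -
    have "g * norm (P *v v) \<le> g * (?c * norm (A *v (P *v v)))"
      using key[of v] gG G by (intro mult_left_mono) auto
    also have "\<dots> = (g * ?c) * norm (A *v (P *v v))" by simp
    also have "\<dots> \<le> norm (A *v (P *v v))"
    proof (rule mult_left_le_one_le)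
      show "0 \<le> g * ?c" using gG G c0 by simp
    qed (use gc in auto)
    finally show ?thesis .
  qed
  then show ?thesis using gG by blast
qed

lemma comp_ineq:
  fixes A B P Q :: "complex^'n^'n" and g :: real
  assumes PQ: "\<And>v. P *v (Q *v v) = 0" and PP: "\<And>v. P *v (P *v v) = P *v v"
    and sum: "\<And>v. P *v v + Q *v v = v"
    and PA: "\<And>v. P *v (A *v v) = A *v (P *v v)"
    and lb: "\<And>v. g * norm (P *v v) \<le> norm (A *v (P *v v))"
  shows "(g - opnorm (P ** B ** P)) * norm (P *v x) - opnorm (P ** B ** Q) * norm (Q *v x)
         \<le> norm (P *v ((A - B) *v x))"
proof -
  have QQ: "(P ** B ** Q) *v (Q *v x) = P *v (B *v (Q *v x))"
  proof -
    have "Q *v (Q *v x) = Q *v x" by (metis PQ add_0 matrix_vector_right_distrib sum)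
    then show ?thesis by (simp add: matrix_vector_mul_assoc[symmetric])
  qed
  have PPB: "(P ** B ** P) *v (P *v x) = P *v (B *v (P *v x))"
    by (simp add: matrix_vector_mul_assoc[symmetric] PP)
  have eq: "P *v ((A - B) *v x) = A *v (P *v x) - (P ** B ** P) *v (P *v x) - (P ** B ** Q) *v (Q *v x)"
  proof -
    have "B *v x = B *v (P *v x) + B *v (Q *v x)" by (metis matrix_vector_right_distrib sum)
    then show ?thesis
      by (simp add: QQ PPB PA matrix_vector_mult_diff_rdistrib matrix_vector_mult_diff_distrib
          matrix_vector_right_distrib)
  qed
  have n1: "norm ((P ** B ** P) *v (P *v x)) \<le> opnorm (P ** B ** P) * norm (P *v x)" by (rule opn)
  have n2: "norm ((P ** B ** Q) *v (Q *v x)) \<le> opnorm (P ** B ** Q) * norm (Q *v x)" by (rule opn)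
  have tri: "norm (a - b - c) \<ge> norm a - norm b - norm c" for a b c :: "complex^'n"
  proof -
    have "norm a = norm ((a - b - c) + (b + c))" by (simp add: algebra_simps)
    also have "\<dots> \<le> norm (a - b - c) + norm (b + c)" by (rule norm_triangle_ineq)
    also have "\<dots> \<le> norm (a - b - c) + (norm b + norm c)" using norm_triangle_ineq[of b c] by simp
    finally show ?thesis by simp
  qed
  have dist: "(g - opnorm (P ** B ** P)) * norm (P *v x) = g * norm (P *v x) - opnorm (P ** B ** P) * norm (P *v x)"
    by (simp add: left_diff_distrib)
  show ?thesis unfolding eq dist
    using lb[of x] n1 n2 tri[of "A *v (P *v x)" "(P ** B ** P) *v (P *v x)" "(P ** B ** Q) *v (Q *v x)"]
    by linarith
qed

lemma arith1:
  fixes e1 e2 b a1 a2 u w :: real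
  assumes "e2 > 0" "b \<ge> 0" "e1 * a1 \<le> b * a2 + u" "e2 * a2 \<le> b * a1 + w"
  shows "(e1 * e2 - b^2) * a1 \<le> e2 * u + b * w"
proof -
  have h1: "e2 * (e1 * a1) \<le> e2 * (b * a2 + u)" using assms by (intro mult_left_mono) auto
  have h2: "b * (e2 * a2) \<le> b * (b * a1 + w)" using assms by (intro mult_left_mono) auto
  have "(e1 * e2 - b^2) * a1 = e2 * (e1 * a1) - b * (b * a1)" by (simp add: algebra_simps power2_eq_square)
  also have "\<dots> \<le> e2 * (b * a2 + u) - b * (b * a1)" using h1 by linarith
  also have "\<dots> = e2 * u + b * (e2 * a2) - b * (b * a1)" by (simp add: algebra_simps)
  also have "\<dots> \<le> e2 * u + b * (b * a1 + w) - b * (b * a1)" using h2 by linarith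
  also have "\<dots> = e2 * u + b * w" by (simp add: algebra_simps)
  finally show ?thesis .
qed

theorem lemma3:
  fixes A B S1 S2 :: "complex^'n^'n" and G1 G2 :: real
  assumes "hermitian A" and "hermitian B"
    and "orth_proj S1" and "S2 = mat 1 - S1"
    and "invertible A"
    and "A = S1 ** A ** S1 + S2 ** A ** S2"
    and "G1 > 0" and "G2 > 0"
    and "opnorm (S1 ** matrix_inv A ** S1) < 1 / G1"
    and "opnorm (S2 ** matrix_inv A ** S2) < 1 / G2"
    and "opnorm (S1 ** B ** S1) < G1 / 2"
    and "opnorm (S2 ** B ** S2) < G2 / 2"
    and "opnorm (S1 ** B ** S2) < min G1 G2 / 2"
  shows "let b11 = opnorm (S1 ** B ** S1); b22 = opnorm (S2 ** B ** S2);
             b12 = opnorm (S1 ** B ** S2); X = matrix_inv (A - B) in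
         invertible (A - B)
       \<and> opnorm (S1 ** X ** S2) \<le> b12 / ((G1 - b11) * (G2 - b22) - b12^2)
       \<and> (b12 > 0 \<longrightarrow> opnorm (S1 ** X ** S2) < b12 / ((G1 - b11) * (G2 - b22) - b12^2))
       \<and> opnorm (S1 ** X ** S1) < 1 / (G1 - b11) * (1 + b12 * opnorm (S1 ** X ** S2))
       \<and> opnorm (S2 ** X ** S2) < 1 / (G2 - b22) * (1 + b12 * opnorm (S1 ** X ** S2))"
proof -
  define M where "M = A - B"
  define X where "X = matrix_inv (A - B)"
  define b11 where "b11 = opnorm (S1 ** B ** S1)"
  define b22 where "b22 = opnorm (S2 ** B ** S2)"
  define b12 where "b12 = opnorm (S1 ** B ** S2)"
  define b21 where "b21 = opnorm (S2 ** B ** S1)"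
  have S1S1: "S1 ** S1 = S1" and hS1: "adjoint_mat S1 = S1"
    using assms(3) unfolding orth_proj_def hermitian_def by auto
  have S1S1v: "\<And>v. S1 *v (S1 *v v) = S1 *v v" by (simp add: matrix_vector_mul_assoc S1S1)
  have S2v: "\<And>v. S2 *v v = v - S1 *v v" using assms(4) by (simp add: matrix_vector_mult_diff_rdistrib)
  have S1S2v: "\<And>v. S1 *v (S2 *v v) = 0" by (simp add: S2v matrix_vector_mult_diff_distrib S1S1v)
  have S2S1v: "\<And>v. S2 *v (S1 *v v) = 0" by (simp add: S2v S1S1v)
  have S2S2v: "\<And>v. S2 *v (S2 *v v) = S2 *v v" by (simp add: S2v matrix_vector_mult_diff_distrib S1S1v)
  have sum12: "\<And>v. S1 *v v + S2 *v v = v" by (simp add: S2v)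
  have sum21: "\<And>v. S2 *v v + S1 *v v = v" by (simp add: S2v)
  have hS2: "adjoint_mat S2 = S2" unfolding assms(4) adj_diff adj_one hS1 ..
  have hS1': "hermitian S1" "hermitian S2" using hS1 hS2 unfolding hermitian_def by auto
  have Av: "A *v v = S1 *v (A *v (S1 *v v)) + S2 *v (A *v (S2 *v v))" for v
  proof -
    have "A *v v = (S1 ** A ** S1 + S2 ** A ** S2) *v v" using arg_cong[OF assms(6), of "\<lambda>N. N *v v"] .
    also have "\<dots> = S1 *v (A *v (S1 *v v)) + S2 *v (A *v (S2 *v v))"
      by (simp add: matrix_vector_mult_add_rdistrib matrix_vector_mul_assoc[symmetric])
    finally show ?thesis .
  qed
  have S1A: "S1 *v (A *v v) = A *v (S1 *v v)" for v
  proof -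
    have "S1 *v (A *v v) = S1 *v (S1 *v (A *v (S1 *v v)) + S2 *v (A *v (S2 *v v)))"
      using Av[of v] by simp
    also have "\<dots> = S1 *v (A *v (S1 *v v))"
      by (simp add: matrix_vector_right_distrib S1S1v S1S2v)
    finally have e1: "S1 *v (A *v v) = S1 *v (A *v (S1 *v v))" .
    have h: "A *v (S1 *v v) = S1 *v (A *v (S1 *v v)) + S2 *v (A *v 0)"
      using Av[of "S1 *v v"] by (simp only: S1S1v S2S1v)
    have z: "S2 *v (A *v 0) = 0" by simp
    have h': "A *v (S1 *v v) = S1 *v (A *v (S1 *v v))" using h unfolding z by (simp only: add_0_right)
    show ?thesis using trans[OF e1 h'[symmetric]] .
  qed
  have S2A: "S2 *v (A *v v) = A *v (S2 *v v)" for v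
    by (simp add: S2v S1A matrix_vector_mult_diff_distrib)
  obtain g1 where g1: "g1 > G1" "\<And>v. g1 * norm (S1 *v v) \<le> norm (A *v (S1 *v v))"
    using lower_bound[OF assms(5) S1S1v S1A assms(7) assms(9)] by blast
  obtain g2 where g2: "g2 > G2" "\<And>v. g2 * norm (S2 *v v) \<le> norm (A *v (S2 *v v))"
    using lower_bound[OF assms(5) S2S2v S2A assms(8) assms(10)] by blast
  have c1: "(g1 - b11) * norm (S1 *v x) - b12 * norm (S2 *v x) \<le> norm (S1 *v (M *v x))" for x
    using comp_ineq[OF S1S2v S1S1v sum12 S1A g1(2), of B x] unfolding M_def b11_def b12_def .
  have c2': "(g2 - b22) * norm (S2 *v x) - b21 * norm (S1 *v x) \<le> norm (S2 *v (M *v x))" for x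
    using comp_ineq[OF S2S1v S2S2v sum21 S2A g2(2), of B x] unfolding M_def b22_def b21_def .
  have hB: "adjoint_mat B = B" using assms(2) unfolding hermitian_def .
  have "adjoint_mat (S1 ** B ** S2) = S2 ** B ** S1"
    by (simp add: adj_mult hS1 hS2 hB matrix_mul_assoc)
  then have b21: "b21 \<le> b12" unfolding b21_def b12_def using opnorm_adj[of "S1 ** B ** S2"] by simp
  have b0: "b11 \<ge> 0" "b22 \<ge> 0" "b12 \<ge> 0" unfolding b11_def b22_def b12_def by (simp_all add: opn_nonneg)
  have c2: "(g2 - b22) * norm (S2 *v x) - b12 * norm (S1 *v x) \<le> norm (S2 *v (M *v x))" for x
  proof -
    have "b21 * norm (S1 *v x) \<le> b12 * norm (S1 *v x)" using b21 by (intro mult_right_mono) auto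
    then show ?thesis using c2'[of x] by linarith
  qed
  have bl: "b11 < G1 / 2" "b22 < G2 / 2" "b12 < G1 / 2" "b12 < G2 / 2"
    using assms(11-13) unfolding b11_def b22_def b12_def by auto
  define e1 where "e1 = g1 - b11"
  define e2 where "e2 = g2 - b22"
  have E1: "e1 > G1 - b11" "G1 - b11 > G1 / 2" using g1 bl unfolding e1_def by auto
  have E2: "e2 > G2 - b22" "G2 - b22 > G2 / 2" using g2 bl unfolding e2_def by auto
  have bb: "b12^2 < (G1 / 2) * (G2 / 2)"
    unfolding power2_eq_square using bl b0 assms(7,8) by (intro mult_strict_mono) auto
  have GG: "(G1 / 2) * (G2 / 2) < (G1 - b11) * (G2 - b22)"
    using E1 E2 assms(7,8) by (intro mult_strict_mono) auto
  define DG where "DG = (G1 - b11) * (G2 - b22) - b12^2"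
  define Dg where "Dg = e1 * e2 - b12^2"
  have DG0: "DG > 0" unfolding DG_def using bb GG by linarith
  have "(G1 - b11) * (G2 - b22) < e1 * e2"
    using E1 E2 assms(7,8) by (intro mult_strict_mono) auto
  then have DgG: "Dg > DG" unfolding Dg_def DG_def by linarith
  have e0: "e1 > 0" "e2 > 0" using E1 E2 assms(7,8) by auto
  have Dgpos: "Dg > 0" using DgG DG0 by linarith
  have inj: "x = 0" if Mx: "M *v x = 0" for x
  proof -
    have a1: "e1 * norm (S1 *v x) \<le> b12 * norm (S2 *v x) + 0" using c1[of x] Mx unfolding e1_def by simp
    have a2: "e2 * norm (S2 *v x) \<le> b12 * norm (S1 *v x) + 0" using c2[of x] Mx unfolding e2_def by simp
    have "Dg * norm (S1 *v x) \<le> 0"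
      using arith1[OF e0(2) b0(3) a1 a2] unfolding Dg_def by simp
    moreover have "0 \<le> Dg * norm (S1 *v x)" using Dgpos by simp
    ultimately have "Dg * norm (S1 *v x) = 0" by linarith
    then have x1: "norm (S1 *v x) = 0" using Dgpos by simp
    have "Dg * norm (S2 *v x) \<le> 0"
      using arith1[OF e0(1) b0(3) a2 a1] unfolding Dg_def by (simp add: mult.commute)
    moreover have "0 \<le> Dg * norm (S2 *v x)" using Dgpos by simp
    ultimately have "Dg * norm (S2 *v x) = 0" by linarith
    then have x2: "norm (S2 *v x) = 0" using Dgpos by simp
    have z1: "S1 *v x = 0" using x1 by simp
    have z2: "S2 *v x = 0" using x2 by simp
    show ?thesis using sum12[of x] unfolding z1 z2 by simp
  qed
  have invM: "invertible M" using inj by (rule inj_invertible)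
  have MXv: "M *v (X *v y) = y" for y
    using inv_props(1)[OF invM] unfolding X_def M_def by (simp add: matrix_vector_mul_assoc)
  define T where "T = opnorm (S1 ** X ** S2)"
  have T0: "T \<ge> 0" unfolding T_def by (rule opn_nonneg)
  have boundT: "T \<le> b12 / Dg" unfolding T_def
  proof (rule opn_le)
    fix y :: "complex^'n"
    define x where "x = X *v (S2 *v y)"
    have Mx: "M *v x = S2 *v y" unfolding x_def by (rule MXv)
    have ny: "norm (S2 *v y) \<le> norm y" by (rule proj_norm[OF hS1'(2) S2S2v])
    have a1: "e1 * norm (S1 *v x) \<le> b12 * norm (S2 *v x) + 0" using c1[of x] Mx S1S2v unfolding e1_def by simp
    have a2: "e2 * norm (S2 *v x) \<le> b12 * norm (S1 *v x) + norm y" using c2[of x] Mx S2S2v ny unfolding e2_def by simp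
    have "Dg * norm (S1 *v x) \<le> b12 * norm y"
      using arith1[OF e0(2) b0(3) a1 a2] unfolding Dg_def by simp
    then have "norm (S1 *v x) \<le> b12 / Dg * norm y"
      unfolding times_divide_eq_left pos_le_divide_eq[OF Dgpos] by (simp add: mult.commute)
    moreover have "(S1 ** X ** S2) *v y = S1 *v x" unfolding x_def by (simp add: matrix_vector_mul_assoc[symmetric] matrix_mul_assoc)
    ultimately show "norm ((S1 ** X ** S2) *v y) \<le> b12 / Dg * norm y" by simp
  qed
  have DD: "0 < Dg * DG" using Dgpos DG0 by simp
  have r1: "T \<le> b12 / DG"
    using boundT divide_left_mono[of DG Dg b12, OF _ b0(3) DD] DgG by linarith
  have r2: "b12 > 0 \<longrightarrow> T < b12 / DG"
    using boundT divide_strict_left_mono[of DG Dg b12, OF DgG _ DD] by linarith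
  have hM: "adjoint_mat M = M" unfolding M_def adj_diff hB
    using assms(1) unfolding hermitian_def by simp
  have adjX: "adjoint_mat X = X"
  proof -
    have MX: "M ** X = mat 1" "X ** M = mat 1" using inv_props[OF invM] unfolding X_def M_def by auto
    have "adjoint_mat X ** M = mat 1" using arg_cong[OF MX(1), of adjoint_mat] by (simp add: adj_mult hM adj_one)
    have "adjoint_mat X = adjoint_mat X ** (M ** X)" using MX(1) by simp
    also have "\<dots> = (adjoint_mat X ** M) ** X" by (rule matrix_mul_assoc)
    also have "\<dots> = X" using \<open>adjoint_mat X ** M = mat 1\<close> by simp
    finally show ?thesis .
  qed
  have "adjoint_mat (S1 ** X ** S2) = S2 ** X ** S1"
    by (simp add: adj_mult hS1 hS2 adjX matrix_mul_assoc)
  then have T21: "opnorm (S2 ** X ** S1) \<le> T" unfolding T_def using opnorm_adj[of "S1 ** X ** S2"] by simp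
  have bound22: "opnorm (S2 ** X ** S2) \<le> (1 + b12 * T) / e2"
  proof (rule opn_le)
    fix y :: "complex^'n"
    define x where "x = X *v (S2 *v y)"
    have Mx: "M *v x = S2 *v y" unfolding x_def by (rule MXv)
    have ny: "norm (S2 *v y) \<le> norm y" by (rule proj_norm[OF hS1'(2) S2S2v])
    have a2: "e2 * norm (S2 *v x) \<le> b12 * norm (S1 *v x) + norm y" using c2[of x] Mx S2S2v ny unfolding e2_def by simp
    have "S1 *v x = (S1 ** X ** S2) *v y" unfolding x_def by (simp add: matrix_vector_mul_assoc[symmetric] matrix_mul_assoc)
    then have "norm (S1 *v x) \<le> T * norm y" unfolding T_def using opn[of "S1 ** X ** S2" y] by simp
    then have "b12 * norm (S1 *v x) \<le> b12 * (T * norm y)" using b0 by (intro mult_left_mono) auto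
    then have "e2 * norm (S2 *v x) \<le> (1 + b12 * T) * norm y" using a2 by (simp add: algebra_simps)
    then have "norm (S2 *v x) \<le> (1 + b12 * T) / e2 * norm y"
      unfolding times_divide_eq_left pos_le_divide_eq[OF e0(2)] by (simp add: mult.commute)
    moreover have "(S2 ** X ** S2) *v y = S2 *v x" unfolding x_def by (simp add: matrix_vector_mul_assoc[symmetric] matrix_mul_assoc)
    ultimately show "norm ((S2 ** X ** S2) *v y) \<le> (1 + b12 * T) / e2 * norm y" by simp
  qed
  have bound11: "opnorm (S1 ** X ** S1) \<le> (1 + b12 * T) / e1"
  proof (rule opn_le)
    fix y :: "complex^'n"
    define x where "x = X *v (S1 *v y)"
    have Mx: "M *v x = S1 *v y" unfolding x_def by (rule MXv)
    have ny: "norm (S1 *v y) \<le> norm y" by (rule proj_norm[OF hS1'(1) S1S1v])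
    have a1: "e1 * norm (S1 *v x) \<le> b12 * norm (S2 *v x) + norm y" using c1[of x] Mx S1S1v ny unfolding e1_def by simp
    have "S2 *v x = (S2 ** X ** S1) *v y" unfolding x_def by (simp add: matrix_vector_mul_assoc[symmetric] matrix_mul_assoc)
    then have "norm (S2 *v x) \<le> opnorm (S2 ** X ** S1) * norm y" using opn[of "S2 ** X ** S1" y] by simp
    also have "\<dots> \<le> T * norm y" using T21 by (intro mult_right_mono) auto
    finally have "b12 * norm (S2 *v x) \<le> b12 * (T * norm y)" using b0 by (intro mult_left_mono) auto
    then have "e1 * norm (S1 *v x) \<le> (1 + b12 * T) * norm y" using a1 by (simp add: algebra_simps)
    then have "norm (S1 *v x) \<le> (1 + b12 * T) / e1 * norm y"
      unfolding times_divide_eq_left pos_le_divide_eq[OF e0(1)] by (simp add: mult.commute)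
    moreover have "(S1 ** X ** S1) *v y = S1 *v x" unfolding x_def by (simp add: matrix_vector_mul_assoc[symmetric] matrix_mul_assoc)
    ultimately show "norm ((S1 ** X ** S1) *v y) \<le> (1 + b12 * T) / e1 * norm y" by simp
  qed
  have "b12 * T \<ge> 0" using b0 T0 by simp
  then have pos: "1 + b12 * T > 0" by linarith
  have r3: "opnorm (S1 ** X ** S1) < 1 / (G1 - b11) * (1 + b12 * T)"
  proof -
    have "(1 + b12 * T) / e1 < (1 + b12 * T) / (G1 - b11)"
      using E1 assms(7) pos by (intro divide_strict_left_mono) auto
    then show ?thesis using bound11 by simp
  qed
  have r4: "opnorm (S2 ** X ** S2) < 1 / (G2 - b22) * (1 + b12 * T)"
  proof -
    have "(1 + b12 * T) / e2 < (1 + b12 * T) / (G2 - b22)"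
      using E2 assms(8) pos by (intro divide_strict_left_mono) auto
    then show ?thesis using bound22 by simp
  qed
  have final: "invertible M \<and> T \<le> b12 / DG \<and> (b12 > 0 \<longrightarrow> T < b12 / DG)
     \<and> opnorm (S1 ** X ** S1) < 1 / (G1 - b11) * (1 + b12 * T)
     \<and> opnorm (S2 ** X ** S2) < 1 / (G2 - b22) * (1 + b12 * T)"
    using invM r1 r2 r3 r4 by blast
  then show ?thesis
    unfolding Let_def M_def X_def T_def b11_def b22_def b12_def DG_def .
qed

end
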